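(* Let $n\ge 1$ and let $B^n=\{x\in\mathbb{R}^n : \|x\|\le 1\}$ be the closed unit ball. There is no decomposition of $B^n$ into sets of diameter less than $2/\sqrt{n}$ such that at most $n$ of the sets meet at any point.
   Context: A decomposition of a space $X$ is a locally finite collection (for compact $X$, a finite collection) of closed subsets of $X$ (the pieces) with pairwise disjoint interiors whose union is $X$. Diameters are Euclidean. *)

theory Defs
  imports "HOL-Analysis.Analysis"
begin

definition decomposition :: "'a::topological_space set \<Rightarrow> 'a set set \<Rightarrow> bool" where
  "decomposition X D \<longleftrightarrow>
     finite D \<and>
     (\<forall>A\<in>D. closedin (top_of_set X) A) \<and>
     (\<forall>A\<in>D. \<forall>B\<in>D. A \<noteq> B \<longrightarrow>
        ((top_of_set X) interior_of A) \<inter> ((top_of_set X) interior_of B) = {}) \<and>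
     \<Union>D = X"

end

theory Submission
  imports Defs
begin

lemma negligible_hull_small:
  fixes P :: "(real^'n) set"
  assumes "finite P" "card P \<le> CARD('n)"
  shows "negligible (convex hull P)"
proof -
  have "interior (affine hull P) = {}"
    using empty_interior_affine_hull[OF assms(1)] assms(2) by simp
  then have "interior (convex hull P) = {}"
    using interior_mono[OF convex_hull_subset_affine_hull] by blast
  then show ?thesis
    using negligible_convex_interior[OF convex_convex_hull] by blast
qed

lemma cube_lebesgue:
  fixes D :: "(real^'n) set set" and a \<delta> :: real
  assumes apos: "a > 0" and dpos: "\<delta> > 0" and finD: "finite D"
    and clD: "\<forall>A\<in>D. closed A \<and> A \<noteq> {}"
    and Cdef: "C = cbox (\<chi> i. -a) (\<chi> i. a)"
    and cov: "C \<subseteq> \<Union>D"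
    and sep: "\<forall>A\<in>D. \<forall>i. \<forall>y\<in>A. \<forall>z\<in>A. \<not>(y$i < -a+\<delta> \<and> z$i > a-\<delta>)"
    and ord: "\<forall>x\<in>C. card {A\<in>D. infdist x A < \<delta>} \<le> CARD('n)"
  shows False
proof -
  define w where "w A x = max 0 (\<delta> - infdist x A)" for A and x :: "real^'n"
  define W where "W x = (\<Sum>A\<in>D. w A x)" for x
  define v :: "(real^'n) set \<Rightarrow> real^'n" where "v A = (\<chi> i. if (\<exists>y\<in>A. y$i < -a+\<delta>) then -a
       else if (\<exists>y\<in>A. y$i > a-\<delta>) then a else 0)" for A
  define f where "f x = (\<Sum>A\<in>D. (w A x / W x) *\<^sub>R v A)" for x
  define T where "T x = {A\<in>D. infdist x A < \<delta>}" for x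
  have memC: "x \<in> C \<longleftrightarrow> (\<forall>i. -a \<le> x$i \<and> x$i \<le> a)" for x
    unfolding Cdef mem_box_cart by simp
  have wnn: "0 \<le> w A x" for A x unfolding w_def by simp
  have Wpos: "W x > 0" if xC: "x \<in> C" for x
  proof -
    obtain A where A: "A \<in> D" "x \<in> A" using cov xC by blast
    have "closed A" "A \<noteq> {}" using clD A(1) by auto
    then have "infdist x A = 0" using in_closed_iff_infdist_zero A(2) by metis
    then have "w A x > 0" using dpos unfolding w_def by simp
    then show ?thesis unfolding W_def by (rule sum_pos2[OF finD A(1)]) (rule wnn)
  qed
  have w0: "w A x = 0" if "A \<notin> T x" "A \<in> D" for A x
    using that unfolding T_def w_def by auto
  have fT: "f x = (\<Sum>A\<in>T x. (w A x / W x) *\<^sub>R v A)" for x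
    unfolding f_def by (rule sum.mono_neutral_right) (auto simp: finD T_def w_def)
  have WT: "W x = (\<Sum>A\<in>T x. w A x)" for x
    unfolding W_def by (rule sum.mono_neutral_right) (auto simp: finD T_def w_def)
  have finT: "finite (T x)" for x unfolding T_def using finD by simp
  have fhull: "f x \<in> convex hull (v ` T x)" if "x \<in> C" for x
  proof -
    have "(\<Sum>A\<in>T x. w A x / W x) = 1"
      using Wpos[OF that] by (simp add: sum_divide_distrib[symmetric] WT[symmetric])
    then show ?thesis unfolding fT
      by (intro convex_sum finT convex_convex_hull)
         (auto simp: wnn Wpos[OF that] less_imp_le hull_inc)
  qed
  have close: "\<exists>y\<in>A. dist x y < \<delta>" if "A \<in> T x" for A x
  proof -
    have "A \<in> D" "infdist x A < \<delta>" using that unfolding T_def by auto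
    then show ?thesis using infdist_attains_inf[of A x] clD by force
  qed
  have face_lo: "v A $ i = -a" if AT: "A \<in> T x" and xi: "x$i = -a" for A x i
  proof -
    obtain y where "y \<in> A" "dist x y < \<delta>" using close[OF AT] by blast
    then have "dist (x$i) (y$i) < \<delta>" using dist_vec_nth_le le_less_trans by blast
    then have "y$i < -a+\<delta>" using xi by (simp add: dist_real_def)
    then show ?thesis unfolding v_def using \<open>y\<in>A\<close> by auto
  qed
  have face_hi: "v A $ i = a" if AT: "A \<in> T x" and xi: "x$i = a" for A x i
  proof -
    obtain y where "y \<in> A" "dist x y < \<delta>" using close[OF AT] by blast
    then have "dist (x$i) (y$i) < \<delta>" using dist_vec_nth_le le_less_trans by blast
    then have y: "y$i > a-\<delta>" using xi by (simp add: dist_real_def)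
    have "A \<in> D" using AT unfolding T_def by auto
    then have "\<not>(\<exists>z\<in>A. z$i < -a+\<delta>)" using sep y \<open>y\<in>A\<close> by blast
    then show ?thesis unfolding v_def using \<open>y\<in>A\<close> y by auto
  qed
  have fcomp: "f x $ i = c" if "x \<in> C" "\<forall>A\<in>T x. v A $ i = c" for x i c
  proof -
    have cv: "convex {z. inner (axis i (1::real)) z = c}" by (rule convex_hyperplane)
    have "v ` T x \<subseteq> {z. inner (axis i (1::real)) z = c}" using that(2) by (auto simp: inner_axis')
    then have "convex hull (v ` T x) \<subseteq> {z. inner (axis i (1::real)) z = c}"
      using cv by (rule hull_minimal)
    then show ?thesis using fhull[OF that(1)] by (auto simp: inner_axis')
  qed
  have cw: "continuous_on C (w A)" for A unfolding w_def by (intro continuous_intros)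
  have cW: "continuous_on C W" unfolding W_def by (intro continuous_on_sum cw)
  have contf: "continuous_on C f"
    unfolding f_def
    by (intro continuous_on_sum continuous_on_scaleR continuous_on_divide cw cW continuous_on_const)
       (use Wpos in force)
  have surj: "p \<in> f ` C" if pC: "p \<in> C" for p
  proof -
    define g where "g y = (\<chi> i. max (-a) (min a ((y - f y + p)$i)))" for y
    have "continuous_on C g" unfolding g_def
      by (intro continuous_intros contf)
    moreover have "g \<in> C \<rightarrow> C" unfolding g_def Pi_iff memC using apos by simp
    moreover have "compact C" "convex C" unfolding Cdef by (auto simp: compact_cbox)
    moreover have "0 \<in> C" using memC[of 0] apos by simp
    then have "C \<noteq> {}" by blast
    ultimately obtain x where x: "x \<in> C" "g x = x" using brouwer by metis
    have "f x $ i = p $ i" for i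
    proof -
      have gi: "max (-a) (min a (x$i - f x$i + p$i)) = x$i"
        using x(2) unfolding g_def by (metis vec_lambda_beta vector_add_component vector_minus_component)
      have xi: "-a \<le> x$i" "x$i \<le> a" "-a \<le> p$i" "p$i \<le> a" using x(1) pC memC by auto
      consider "x$i = a" | "x$i = -a" | "-a < x$i \<and> x$i < a" using xi by linarith
      then show ?thesis
      proof cases
        case 1
        then have "f x $ i = a" using fcomp[OF x(1)] face_hi by blast
        then show ?thesis using gi 1 xi apos by (smt (verit))
      next
        case 2
        then have "f x $ i = -a" using fcomp[OF x(1)] face_lo by blast
        then show ?thesis using gi 2 xi apos by (smt (verit))
      next
        case 3
        then show ?thesis using gi by (smt (verit))
      qed
    qed
    then show ?thesis using x(1) by (metis image_eqI vec_eq_iff)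
  qed
  define \<T> where "\<T> = (\<lambda>S. convex hull (v ` S)) ` {S. S \<subseteq> D \<and> card S \<le> CARD('n)}"
  have "C \<subseteq> \<Union>\<T>"
  proof
    fix p assume "p \<in> C"
    then obtain x where x: "x \<in> C" "p = f x" using surj by blast
    have "T x \<subseteq> D" "card (T x) \<le> CARD('n)" using ord x(1) unfolding T_def by auto
    then show "p \<in> \<Union>\<T>" unfolding \<T>_def using fhull[OF x(1)] x(2) by blast
  qed
  moreover have "negligible (\<Union>\<T>)"
  proof (rule negligible_Union)
    show "finite \<T>" unfolding \<T>_def using finD by simp
    fix U assume "U \<in> \<T>"
    then obtain S where S: "S \<subseteq> D" "card S \<le> CARD('n)" "U = convex hull (v ` S)"
      unfolding \<T>_def by blast
    have "finite S" using S(1) finD finite_subset by blast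
    then have "card (v ` S) \<le> CARD('n)" using S(2) card_image_le le_trans by blast
    then show "negligible U" using S(3) negligible_hull_small \<open>finite S\<close> by blast
  qed
  ultimately have "negligible C" using negligible_subset by blast
  moreover have "(0::real^'n) \<in> box (\<chi> i. -a) (\<chi> i. a)" using apos by (simp add: mem_box_cart)
  ultimately show False using negligible_interval(1) Cdef by auto
qed

theorem corollary1p4:
  "\<not> (\<exists>D. decomposition (cball (0::real^'n) 1) D \<and>
         (\<forall>A\<in>D. diameter A < 2 / sqrt (real CARD('n))) \<and>
         (\<forall>x\<in>cball (0::real^'n) 1. card {A\<in>D. x \<in> A} \<le> CARD('n)))"
proof
  assume "\<exists>D. decomposition (cball (0::real^'n) 1) D \<and>
         (\<forall>A\<in>D. diameter A < 2 / sqrt (real CARD('n))) \<and>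
         (\<forall>x\<in>cball (0::real^'n) 1. card {A\<in>D. x \<in> A} \<le> CARD('n))"
  then obtain D where dec: "decomposition (cball (0::real^'n) 1) D"
    and diam: "\<forall>A\<in>D. diameter A < 2 / sqrt (real CARD('n))"
    and ord: "\<forall>x\<in>cball (0::real^'n) 1. card {A\<in>D. x \<in> A} \<le> CARD('n)" by blast
  define n where "n = CARD('n)"
  define a where "a = 1 / sqrt (real n)"
  define B where "B = cball (0::real^'n) 1"
  define C where "C = cbox (\<chi> i::'n. -a) (\<chi> i. a)"
  define D' where "D' = D - {{}}"
  have npos: "n > 0" by (simp add: n_def)
  have apos: "a > 0" using npos by (simp add: a_def)
  have a2: "real n * a\<^sup>2 = 1" using npos by (simp add: a_def power_divide)
  have diam': "\<forall>A\<in>D. diameter A < 2 * a" using diam by (simp add: a_def n_def)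
  have finD: "finite D" and clin: "\<forall>A\<in>D. closedin (top_of_set B) A" and unD: "\<Union>D = B"
    using dec unfolding decomposition_def B_def by auto
  have clA: "closed A" "A \<subseteq> B" if "A \<in> D" for A
  proof -
    have "closedin (top_of_set B) A" using clin that by blast
    then show "closed A" "A \<subseteq> B"
      using closedin_closed_trans[OF _ closed_cball] closedin_imp_subset unfolding B_def by blast+
  qed
  have bdA: "bounded A" if "A \<in> D" for A
    using clA(2)[OF that] bounded_subset bounded_cball unfolding B_def by blast
  have memC: "x \<in> C \<longleftrightarrow> (\<forall>i. -a \<le> x$i \<and> x$i \<le> a)" for x
    unfolding C_def mem_box_cart by simp
  have CB: "C \<subseteq> B"
  proof
    fix x assume "x \<in> C"
    then have xi: "\<bar>x$i\<bar> \<le> \<bar>a\<bar>" for i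
    proof -
      have "-a \<le> x$i \<and> x$i \<le> a" using \<open>x \<in> C\<close> memC by blast
      then show ?thesis using apos by linarith
    qed
    have "norm x = sqrt (\<Sum>i\<in>UNIV. (x$i)\<^sup>2)" by (simp add: norm_vec_def L2_set_def)
    also have "(\<Sum>i\<in>UNIV. (x$i)\<^sup>2) \<le> (\<Sum>i\<in>(UNIV::'n set). a\<^sup>2)"
      by (intro sum_mono) (use xi abs_le_square_iff in blast)
    also have "(\<Sum>i\<in>(UNIV::'n set). a\<^sup>2) = 1" using a2 by (simp add: n_def)
    finally show "x \<in> B" unfolding B_def by simp
  qed
  have finD': "finite D'" unfolding D'_def using finD by simp
  have clD': "\<forall>A\<in>D'. closed A \<and> A \<noteq> {}" unfolding D'_def using clA by auto
  have covC: "C \<subseteq> \<Union>D'" using CB unD unfolding D'_def by auto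
  have zC: "0 \<in> C" using memC apos by simp
  then have Cne: "C \<noteq> {}" by blast
  have "D' \<noteq> {}" using covC zC by blast
  define d where "d = Max (diameter ` D')"
  have dlt: "d < 2 * a" unfolding d_def using finD' \<open>D' \<noteq> {}\<close> diam'
    by (subst Max_less_iff) (auto simp: D'_def)
  have dge: "diameter A \<le> d" if "A \<in> D'" for A
    unfolding d_def using finD' that by (intro Max_ge) auto
  define \<delta>0 where "\<delta>0 = (2 * a - d) / 2"
  have d0pos: "\<delta>0 > 0" using dlt by (simp add: \<delta>0_def)
  define \<S> where "\<S> = {S. S \<subseteq> D' \<and> card S = Suc n}"
  have finS: "finite \<S>"
  proof (rule finite_subset[of _ "Pow D'"])
    show "\<S> \<subseteq> Pow D'" unfolding \<S>_def by blast
  qed (simp add: finD')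
  have cC: "compact C" unfolding C_def by (simp add: compact_cbox)
  have "\<exists>m>0. \<forall>x\<in>C. m \<le> (\<Sum>A\<in>S. infdist x A)" if "S \<in> \<S>" for S
  proof -
    have SD: "S \<subseteq> D'" and cS: "card S = Suc n" using that unfolding \<S>_def by auto
    have finS: "finite S" using SD finD' finite_subset by blast
    have "continuous_on C (\<lambda>x. \<Sum>A\<in>S. infdist x A)" by (intro continuous_intros)
    then obtain x0 where x0: "x0 \<in> C" "\<forall>y\<in>C. (\<Sum>A\<in>S. infdist x0 A) \<le> (\<Sum>A\<in>S. infdist y A)"
      using continuous_attains_inf[OF cC Cne] by blast
    have "(\<Sum>A\<in>S. infdist x0 A) > 0"
    proof (rule ccontr)
      assume "\<not> (\<Sum>A\<in>S. infdist x0 A) > 0"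
      moreover have "(\<Sum>A\<in>S. infdist x0 A) \<ge> 0" by (intro sum_nonneg infdist_nonneg)
      ultimately have "(\<Sum>A\<in>S. infdist x0 A) = 0" by linarith
      then have z: "\<forall>A\<in>S. infdist x0 A = 0" by (simp add: sum_nonneg_eq_0_iff[OF finS] infdist_nonneg)
      have "\<forall>A\<in>S. x0 \<in> A"
      proof
        fix A assume "A \<in> S"
        then have "closed A" "A \<noteq> {}" using clD' SD by auto
        then show "x0 \<in> A" using in_closed_iff_infdist_zero z \<open>A \<in> S\<close> by metis
      qed
      then have "S \<subseteq> {A\<in>D. x0 \<in> A}" using SD unfolding D'_def by auto
      then have "card S \<le> card {A\<in>D. x0 \<in> A}" by (rule card_mono[rotated]) (simp add: finD)
      also have "\<dots> \<le> n" using ord CB x0(1) unfolding B_def n_def by (meson subsetD)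
      finally show False using cS by simp
    qed
    then show ?thesis using x0(2) by (intro exI[of _ "\<Sum>A\<in>S. infdist x0 A"]) simp
  qed
  then obtain m where m: "\<forall>S\<in>\<S>. m S > 0 \<and> (\<forall>x\<in>C. m S \<le> (\<Sum>A\<in>S. infdist x A))"
    by (metis (no_types, lifting))
  define \<delta>1 where "\<delta>1 = Min (insert \<delta>0 (m ` \<S>))"
  have d1pos: "\<delta>1 > 0" unfolding \<delta>1_def using finS m d0pos by (subst Min_gr_iff) auto
  have d1le0: "\<delta>1 \<le> \<delta>0" unfolding \<delta>1_def using finS by (intro Min_le) auto
  have d1lem: "\<delta>1 \<le> m S" if "S \<in> \<S>" for S unfolding \<delta>1_def using finS that by (intro Min_le) auto
  define \<delta> where "\<delta> = \<delta>1 / real (Suc n)"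
  have dpos: "\<delta> > 0" using d1pos by (simp add: \<delta>_def)
  have "\<delta> \<le> \<delta>1" unfolding \<delta>_def using d1pos by (simp add: divide_le_eq)
  then have dle: "\<delta> \<le> \<delta>0" using d1le0 by linarith
  have sep: "\<forall>A\<in>D'. \<forall>i. \<forall>y\<in>A. \<forall>z\<in>A. \<not>(y$i < -a+\<delta> \<and> z$i > a-\<delta>)"
  proof (intro ballI allI notI)
    fix A i y z assume A: "A \<in> D'" and y: "y \<in> A" and z: "z \<in> A" and h: "y$i < -a+\<delta> \<and> z$i > a-\<delta>"
    have "A \<in> D" using A unfolding D'_def by auto
    have "dist y z \<le> diameter A" using diameter_bounded_bound[OF bdA[OF \<open>A\<in>D\<close>] y z] .
    moreover have "dist (y$i) (z$i) \<le> dist y z" by (rule dist_vec_nth_le)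
    moreover have "diameter A \<le> d" using dge A .
    ultimately have "\<bar>y$i - z$i\<bar> \<le> d" by (simp add: dist_real_def)
    then have "z$i - y$i \<le> d" by (simp add: abs_le_iff)
    moreover have "z$i - y$i > 2*a - 2*\<delta>" using conjunct1[OF h] conjunct2[OF h] by linarith
    moreover have "2*a - 2*\<delta> \<ge> d" using dle unfolding \<delta>0_def by (simp add: field_simps)
    ultimately show False by linarith
  qed
  have ordd: "\<forall>x\<in>C. card {A\<in>D'. infdist x A < \<delta>} \<le> CARD('n)"
  proof (rule ballI, rule ccontr)
    fix x assume xC: "x \<in> C" and nl: "\<not> card {A\<in>D'. infdist x A < \<delta>} \<le> CARD('n)"
    then have "Suc n \<le> card {A\<in>D'. infdist x A < \<delta>}" by (simp add: n_def)
    then obtain S where S: "S \<subseteq> {A\<in>D'. infdist x A < \<delta>}" "card S = Suc n"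
      by (meson obtain_subset_with_card_n)
    have SS: "S \<in> \<S>" using S unfolding \<S>_def by auto
    have finS: "finite S" using S(2) card.infinite by force
    have "S \<noteq> {}" using S(2) by auto
    have "(\<Sum>A\<in>S. infdist x A) < (\<Sum>A\<in>S. \<delta>)"
      using S(1) by (intro sum_strict_mono finS \<open>S \<noteq> {}\<close>) auto
    also have "\<dots> = \<delta>1" using S(2) by (simp add: \<delta>_def)
    also have "\<dots> \<le> m S" using d1lem SS .
    also have "\<dots> \<le> (\<Sum>A\<in>S. infdist x A)" using m SS xC by blast
    finally show False by simp
  qed
  show False
    using cube_lebesgue[OF apos dpos finD' clD' C_def covC sep ordd] .
qed

end
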